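(* Let $p$ be an odd prime and $a,s$ natural numbers with $a<p$. Let $\omega=\{\omega_1,\ldots,\omega_{sp}\}$ be a set partition of $\{1,\ldots,asp\}$ into $sp$ sets of size $a$. Then $\omega$ is fixed by $R_{as}$ if and only if there exist a set partition $\delta=\{\delta_1,\ldots,\delta_s\}$ of $\{1,\ldots,as\}$ into $s$ sets of size $a$ and $s$ sets $A_1,\ldots,A_s$ of $\omega$ such that for all $i\in\{1,\ldots,s\}$ and $j\in\{1,\ldots,as\}$, $$|A_i\cap\mathcal{O}_j|=\begin{cases}1 & \text{if } j\in\delta_i,\\ 0 & \text{if } j\notin\delta_i,\end{cases}$$ and $$\omega=\{A_1,A_1\sigma,\ldots,A_1\sigma^{p-1},A_2,\ldots,A_2\sigma^{p-1},\ldots,A_s,\ldots,A_s\sigma^{p-1}\}.$$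
   Context: For $j\geq 1$ let $z_j=(p(j-1)+1,p(j-1)+2,\ldots,pj)$, a $p$-cycle, and $\mathcal{O}_j=\{p(j-1)+1,\ldots,pj\}$ its support. Let $\sigma=z_1z_2\cdots z_{as}\in S_{asp}$ and $R_{as}=\langle\sigma\rangle$. Permutations act on the right, and $S_{asp}$ acts on set partitions of $\{1,\ldots,asp\}$ by acting on each element. *)

theory Defs
  imports Main "HOL-Library.Disjoint_Sets" "HOL-Computational_Algebra.Primes"
begin

definition orb :: "nat \<Rightarrow> nat \<Rightarrow> nat set" where
  "orb p j = {p * (j - 1) + 1 .. p * j}"

text \<open>sigma = z_1 z_2 ... z_n in S_{np}, z_j = (p(j-1)+1, ..., pj);
  as a function on nat (identity outside {1..np}).\<close>
definition sigma :: "nat \<Rightarrow> nat \<Rightarrow> nat \<Rightarrow> nat" where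
  "sigma p n x = (if 1 \<le> x \<and> x \<le> p * n
                  then (if x mod p = 0 then x + 1 - p else x + 1)
                  else x)"

definition setact :: "(nat \<Rightarrow> nat) \<Rightarrow> nat set \<Rightarrow> nat set" where
  "setact g A = g ` A"

text \<open>A set partition is fixed by R_n = <sigma> iff fixed by every power of sigma.\<close>
definition fixed_by_R :: "nat \<Rightarrow> nat \<Rightarrow> nat set set \<Rightarrow> bool" where
  "fixed_by_R p n \<omega> = (\<forall>k::nat. setact (sigma p n ^^ k) ` \<omega> = \<omega>)"

end

theory Submission
  imports Defs
begin

lemma sig_step:
  assumes "p > 0" "q < n" "r < p"
  shows "sigma p n (p*q + r + 1) = p*q + (r+1) mod p + 1"
proof -
  have le: "p*q + r + 1 \<le> p*n"
  proof -
    have "p*q + r + 1 \<le> p*q + p" using assms by simp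
    also have "\<dots> = p*(q+1)" by simp
    also have "\<dots> \<le> p*n" using assms by (intro mult_le_mono2) simp
    finally show ?thesis .
  qed
  have m: "(p*q + r + 1) mod p = (r+1) mod p" by (metis add.assoc mod_mult_self3 mult.commute)
  show ?thesis
  proof (cases "r + 1 = p")
    case True
    then show ?thesis using le m unfolding sigma_def by simp
  next
    case False
    then have "r+1 < p" using assms by simp
    then show ?thesis using le m unfolding sigma_def by simp
  qed
qed

lemma sig_pow:
  assumes "p > 0"
  shows "(sigma p n ^^ k) x = (if 1 \<le> x \<and> x \<le> p*n
     then p*((x-1) div p) + ((x-1) mod p + k) mod p + 1 else x)"
proof (induction k)
  case 0
  then show ?case by (simp add: div_mult_mod_eq)
next
  case (Suc k)
  show ?case
  proof (cases "1 \<le> x \<and> x \<le> p*n")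
    case True
    have q: "(x-1) div p < n" using True assms
      by (metis Suc_le_eq Suc_pred less_mult_imp_div_less mult.commute le_less_trans less_Suc_eq_le diff_less zero_less_one order_less_le_trans)
    have r: "((x-1) mod p + k) mod p < p" using assms by simp
    have "(sigma p n ^^ Suc k) x = sigma p n ((sigma p n ^^ k) x)" by simp
    also have "\<dots> = p*((x-1) div p) + (((x-1) mod p + k) mod p + 1) mod p + 1"
      using Suc True sig_step[OF assms q r] by presburger
    also have "(((x-1) mod p + k) mod p + 1) mod p = ((x-1) mod p + Suc k) mod p"
      by (simp add: mod_Suc_eq)
    finally show ?thesis using True by simp
  next
    case False
    have "(sigma p n ^^ Suc k) x = sigma p n ((sigma p n ^^ k) x)" by simp
    also have "\<dots> = sigma p n x" using Suc.IH False by metis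
    also have "\<dots> = x" using False unfolding sigma_def by auto
    finally show ?thesis using False by auto
  qed
qed

lemma sig_pow_mod: "p > 0 \<Longrightarrow> sigma p n ^^ k = sigma p n ^^ (k mod p)"
  by (rule ext) (simp add: sig_pow mod_add_right_eq)

lemma img_add: "(f^^(m+k)) ` B = (f^^m) ` ((f^^k) ` B)"
  by (simp add: funpow_add image_comp)

lemma sig_blk: assumes "p > 0" shows "((sigma p n ^^ k) x - 1) div p = (x-1) div p"
proof (cases "1 \<le> x \<and> x \<le> p*n")
  case True
  have "((x-1) mod p + k) mod p < p" using assms by simp
  then have "(p*((x-1) div p) + ((x-1) mod p + k) mod p) div p = (x-1) div p"
    using assms by simp
  then show ?thesis using True by (simp add: sig_pow[OF assms])
next
  case False
  then show ?thesis by (auto simp add: sig_pow[OF assms])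
qed

lemma sig_range: assumes "p > 0" "1 \<le> x" "x \<le> p*n"
  shows "1 \<le> (sigma p n ^^ k) x \<and> (sigma p n ^^ k) x \<le> p*n"
proof -
  have q: "(x-1) div p < n" using assms
    by (metis Suc_le_eq Suc_pred less_mult_imp_div_less mult.commute le_less_trans less_Suc_eq_le diff_less zero_less_one order_less_le_trans)
  have r: "((x-1) mod p + k) mod p < p" using assms by simp
  have "p*((x-1) div p) + ((x-1) mod p + k) mod p + 1 \<le> p*((x-1) div p) + p" using r by simp
  also have "\<dots> = p*((x-1) div p + 1)" by simp
  also have "\<dots> \<le> p*n" using q by (intro mult_le_mono2) simp
  finally show ?thesis using assms by (simp add: sig_pow[OF assms(1)])
qed

lemma sig_connect: assumes "p > 0" "1 \<le> x" "x \<le> p*n" "1 \<le> y" "y \<le> p*n"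
  "(x-1) div p = (y-1) div p"
  shows "\<exists>k<p. (sigma p n ^^ k) x = y"
proof -
  define k where "k = ((y-1) mod p + p - (x-1) mod p) mod p"
  have "k < p" using assms unfolding k_def by simp
  have "((x-1) mod p + k) mod p = (y-1) mod p"
  proof -
    have "((x-1) mod p + k) mod p = ((x-1) mod p + ((y-1) mod p + p - (x-1) mod p)) mod p"
      unfolding k_def by (simp add: mod_add_right_eq)
    also have "(x-1) mod p + ((y-1) mod p + p - (x-1) mod p) = (y-1) mod p + p"
      using mod_less_divisor[OF assms(1), of "x-1"] by linarith
    finally show ?thesis by simp
  qed
  then have "(sigma p n ^^ k) x = p*((y-1) div p) + (y-1) mod p + 1"
    using assms by (simp add: sig_pow[OF assms(1)])
  also have "\<dots> = y" using assms by simp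
  finally show ?thesis using \<open>k < p\<close> by blast
qed

lemma sig_orbit_inj: assumes "prime p" "1 \<le> x" "x \<le> p*n" "0 < k" "k < p" "m1 < p" "m2 < p"
  "(sigma p n ^^ (k*m1)) x = (sigma p n ^^ (k*m2)) x"
  shows "m1 = m2"
proof -
  have p0: "p > 0" using assms prime_gt_0_nat by blast
  have e: "((x-1) mod p + k*m1) mod p = ((x-1) mod p + k*m2) mod p"
    using assms(8) assms(2,3) by (simp add: sig_pow[OF p0])
  have key: "m1 = m2" if "m1 \<le> m2" "m1 < p" "m2 < p"
       "((x-1) mod p + k*m1) mod p = ((x-1) mod p + k*m2) mod p" for m1 m2
  proof -
    have "p dvd ((x-1) mod p + k*m2) - ((x-1) mod p + k*m1)"
      using that by (subst mod_eq_dvd_iff_nat[symmetric]) (auto intro: mult_le_mono2)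
    then have "p dvd k * (m2 - m1)" by (simp add: diff_mult_distrib2)
    then have "p dvd k \<or> p dvd (m2 - m1)" using assms(1) prime_dvd_mult_nat by blast
    moreover have "\<not> p dvd k" using assms(4,5) by (auto dest: dvd_imp_le)
    ultimately have "p dvd (m2 - m1)" by blast
    moreover have "m2 - m1 < p" using that by simp
    ultimately have "m2 - m1 = 0" using dvd_imp_le by fastforce
    then show ?thesis using that by simp
  qed
  show ?thesis
  proof (cases "m1 \<le> m2")
    case True then show ?thesis using key assms e by blast
  next
    case False then show ?thesis using key[of m2 m1] assms e by simp
  qed
qed

lemma orb_mem: assumes "p > 0" "j \<ge> 1"
  shows "x \<in> orb p j \<longleftrightarrow> 1 \<le> x \<and> (x-1) div p + 1 = j"
proof
  assume "x \<in> orb p j"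
  then have h: "p*(j-1) + 1 \<le> x" "x \<le> p*j" by (auto simp: orb_def)
  have "p*j = p*(j-1) + p" using assms by (cases j) auto
  then have "p*(j-1) \<le> x - 1" "x - 1 < p*(j-1) + p" using h assms by linarith+
  then have "(x-1) div p = j-1" by (intro div_nat_eqI) auto
  then show "1 \<le> x \<and> (x-1) div p + 1 = j" using h assms by auto
next
  assume h: "1 \<le> x \<and> (x-1) div p + 1 = j"
  then have q: "(x-1) div p = j - 1" by auto
  have "p * ((x-1) div p) \<le> x - 1" by (simp add: mult.commute)
  then have l1: "p * (j-1) \<le> x - 1" by (metis q)
  have "x - 1 < p * ((x-1) div p) + p" using assms
    by (metis add.commute div_mult_mod_eq mod_less_divisor nat_add_left_cancel_less mult.commute)
  then have l2: "x - 1 < p * (j-1) + p" by (metis q)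
  have "p*j = p*(j-1) + p" using assms by (cases j) auto
  moreover have "p*(j-1) + 1 \<le> x" using l1 h by linarith
  moreover have "x \<le> p*(j-1) + p" using l2 h by linarith
  ultimately show "x \<in> orb p j" unfolding orb_def by simp
qed

theorem lemma3p2:
  fixes p a s :: nat and \<omega> :: "nat set set"
  assumes "prime p" and "odd p" and "a < p"
    and "partition_on {1 .. a * s * p} \<omega>" and "card \<omega> = s * p"
    and "\<forall>B\<in>\<omega>. card B = a"
  shows "fixed_by_R p (a * s) \<omega> \<longleftrightarrow>
    (\<exists>(\<delta> :: nat \<Rightarrow> nat set) (A :: nat \<Rightarrow> nat set).
        partition_on {1 .. a * s} (\<delta> ` {1..s}) \<and> card (\<delta> ` {1..s}) = s \<and>
        (\<forall>i\<in>{1..s}. card (\<delta> i) = a) \<and>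
        (\<forall>i\<in>{1..s}. A i \<in> \<omega>) \<and>
        (\<forall>i\<in>{1..s}. \<forall>j\<in>{1 .. a * s}.
            card (A i \<inter> orb p j) = (if j \<in> \<delta> i then 1 else 0)) \<and>
        \<omega> = {setact (sigma p (a * s) ^^ k) (A i) | i k. i \<in> {1..s} \<and> k < p})"
proof -
  have p0: "p > 0" using assms(1) prime_gt_0_nat by blast
  define n where "n = a * s"
  define g where "g k B = (sigma p n ^^ k) ` B" for k B
  have setg: "setact (sigma p (a*s) ^^ k) = g k" for k
    by (rule ext) (simp add: setact_def g_def n_def)
  have fixg: "fixed_by_R p (a*s) \<omega> \<longleftrightarrow> (\<forall>k. g k ` \<omega> = \<omega>)"
    unfolding fixed_by_R_def setg ..
  have gadd: "g (m+k) B = g m (g k B)" for m k B unfolding g_def by (rule img_add)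
  have gmod: "g k B = g (k mod p) B" for k B unfolding g_def using sig_pow_mod[OF p0] by metis
  have g0: "g 0 B = B" for B unfolding g_def by simp
  have U: "\<Union>\<omega> = {1..p*n}" using partition_onD1[OF assms(4)] unfolding n_def
    by (simp add: mult.commute mult.left_commute)
  have finw: "finite \<omega>" using U by (metis finite_UnionD finite_atLeastAtMost)
  have Bsub: "B \<subseteq> {1..p*n}" if "B \<in> \<omega>" for B using U that by blast
  have Bne: "B \<noteq> {}" if "B \<in> \<omega>" for B using partition_onD3[OF assms(4)] that by blast
  have Bfin: "finite B" if "B \<in> \<omega>" for B using Bsub[OF that] finite_subset by blast
  have disj: "B \<inter> C = {}" if "B \<in> \<omega>" "C \<in> \<omega>" "B \<noteq> C" for B C
    using disjointD[OF partition_onD2[OF assms(4)]] that by blast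
  show ?thesis
  proof
    assume fx: "fixed_by_R p (a * s) \<omega>"
    then have gin: "g k B \<in> \<omega>" if "B \<in> \<omega>" for k B using fixg that by blast
    have C1: "g k B \<noteq> B" if B: "B \<in> \<omega>" and k: "0 < k" "k < p" for B k
    proof
      assume e: "g k B = B"
      have inv: "g (k*m) B = B" for m
      proof (induction m)
        case 0 then show ?case using g0 by simp
      next
        case (Suc m)
        have "g (k * Suc m) B = g (k + k*m) B" by simp
        also have "\<dots> = g k (g (k*m) B)" by (rule gadd)
        finally show ?case using Suc e by simp
      qed
      obtain x where x: "x \<in> B" using Bne[OF B] by blast
      have xr: "1 \<le> x" "x \<le> p*n" using Bsub[OF B] x by auto
      have sub: "(\<lambda>m. (sigma p n ^^ (k*m)) x) ` {..<p} \<subseteq> B"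
      proof
        fix y assume "y \<in> (\<lambda>m. (sigma p n ^^ (k*m)) x) ` {..<p}"
        then obtain m where "y = (sigma p n ^^ (k*m)) x" by blast
        then have "y \<in> g (k*m) B" unfolding g_def using x by blast
        then show "y \<in> B" using inv by simp
      qed
      have inj: "inj_on (\<lambda>m. (sigma p n ^^ (k*m)) x) {..<p}"
        by (rule inj_onI) (use sig_orbit_inj[OF assms(1) xr k] in auto)
      have "card {..<p} \<le> card B" using card_inj_on_le[OF inj sub Bfin[OF B]] .
      then show False using assms(3,6) B by auto
    qed
    have C2: "x = y" if B: "B \<in> \<omega>" and xy: "x \<in> B" "y \<in> B" "(x-1) div p = (y-1) div p" for B x y
    proof (rule ccontr)
      assume ne: "x \<noteq> y"
      have xr: "1 \<le> x" "x \<le> p*n" "1 \<le> y" "y \<le> p*n" using Bsub[OF B] xy by auto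
      obtain k where k: "k < p" "(sigma p n ^^ k) x = y" using sig_connect[OF p0 xr xy(3)] by blast
      have "k \<noteq> 0" using k ne by (metis funpow_0)
      then have "g k B \<noteq> B" using C1[OF B] k by simp
      then have "g k B \<inter> B = {}" using disj gin B by blast
      moreover have "y \<in> g k B" unfolding g_def using k xy(1) by blast
      ultimately show False using xy(2) by blast
    qed
    define Orb where "Orb B = (\<lambda>k. g k B) ` {..<p}" for B
    have orb_all: "g k B \<in> Orb B" for k B unfolding Orb_def using gmod[of k B] p0 by auto
    have orb_self: "B \<in> Orb B" for B using orb_all[of 0 B] g0 by simp
    have orb_sub: "Orb B \<subseteq> \<omega>" if "B \<in> \<omega>" for B unfolding Orb_def using gin that by blast
    have orb_card: "card (Orb B) = p" if B: "B \<in> \<omega>" for B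
    proof -
      have "inj_on (\<lambda>k. g k B) {..<p}"
      proof (rule inj_onI, rule ccontr)
        fix k1 k2 assume k: "k1 \<in> {..<p}" "k2 \<in> {..<p}" "g k1 B = g k2 B" "k1 \<noteq> k2"
        have gen: False if "u < v" "u < p" "v < p" "g u B = g v B" for u v
        proof -
          have "g (p - v + u) B = g (p - v) (g u B)" by (rule gadd)
          also have "\<dots> = g (p - v) (g v B)" using that by simp
          also have "\<dots> = g (p - v + v) B" by (rule gadd[symmetric])
          also have "\<dots> = B" using that g0 gmod[of p B] by simp
          finally have e: "g (p - v + u) B = B" .
          have "p - v + u < p" "0 < p - v + u" using that by auto
          then have "g (p - v + u) B \<noteq> B" using C1[OF B] by simp
          then show False using e by contradiction
        qed
        show False
        proof (cases "k1 < k2")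
          case True then show ?thesis using gen k by auto
        next
          case False then show ?thesis using gen[of k2 k1] k by auto
        qed
      qed
      then show ?thesis unfolding Orb_def by (simp add: card_image)
    qed
    have orb_eq: "Orb C = Orb B" if CB: "C \<in> Orb B" for B C
    proof -
      obtain k where k: "C = g k B" using CB unfolding Orb_def by blast
      have "Orb C \<subseteq> Orb B"
      proof
        fix X assume "X \<in> Orb C"
        then obtain m where "X = g m C" unfolding Orb_def by blast
        then have "X = g (m+k) B" using k gadd by simp
        then show "X \<in> Orb B" using orb_all by simp
      qed
      moreover have "Orb B \<subseteq> Orb C"
      proof
        fix X assume "X \<in> Orb B"
        then obtain m where m: "X = g m B" unfolding Orb_def by blast
        have le: "k \<le> p*k" using p0 by simp
        have "g (m + p*k - k) C = g (m + p*k - k + k) B" using k gadd by simp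
        also have "m + p*k - k + k = m + p*k" using le by linarith
        also have "g (m + p*k) B = g m B" using gmod[of "m+p*k" B] gmod[of m B] by simp
        finally show "X \<in> Orb C" using m orb_all by metis
      qed
      ultimately show ?thesis by blast
    qed
    define \<Omega> where "\<Omega> = Orb ` \<omega>"
    have finO: "finite \<Omega>" unfolding \<Omega>_def using finw by simp
    have UO: "\<Union>\<Omega> = \<omega>" unfolding \<Omega>_def using orb_sub orb_self by blast
    have "p * card \<Omega> = card (\<Union>\<Omega>)"
    proof -
      have f1: "finite (\<Union>\<Omega>)" using UO finw by simp
      have f2: "\<forall>c\<in>\<Omega>. card c = p" unfolding \<Omega>_def using orb_card by blast
      have f3: "\<forall>c1\<in>\<Omega>. \<forall>c2\<in>\<Omega>. c1 \<noteq> c2 \<longrightarrow> c1 \<inter> c2 = {}"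
        unfolding \<Omega>_def using orb_eq orb_sub by blast
      show ?thesis using card_partition[OF finO f1] f2 f3 by blast
    qed
    then have cO: "card \<Omega> = s" using UO assms(5) p0 by simp
    obtain h where h: "bij_betw h {1..s} \<Omega>" using ex_bij_betw_nat_finite_1[OF finO] cO by metis
    define A where "A i = (SOME B. B \<in> \<omega> \<and> Orb B = h i)" for i
    have Ai: "A i \<in> \<omega> \<and> Orb (A i) = h i" if "i \<in> {1..s}" for i
    proof -
      have "h i \<in> \<Omega>" using h that bij_betwE by blast
      then have "\<exists>B. B \<in> \<omega> \<and> Orb B = h i" unfolding \<Omega>_def by blast
      then show ?thesis unfolding A_def by (rule someI_ex)
    qed
    have Adist: "Orb (A i) \<noteq> Orb (A i')" if "i \<in> {1..s}" "i' \<in> {1..s}" "i \<noteq> i'" for i i'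
      using Ai that h unfolding bij_betw_def inj_on_def by metis
    have weq: "\<omega> = {g k (A i) | i k. i \<in> {1..s} \<and> k < p}"
    proof
      show "\<omega> \<subseteq> {g k (A i) | i k. i \<in> {1..s} \<and> k < p}"
      proof
        fix C assume C: "C \<in> \<omega>"
        then have "Orb C \<in> \<Omega>" unfolding \<Omega>_def by blast
        then obtain i where i: "i \<in> {1..s}" "h i = Orb C" using h unfolding bij_betw_def by blast
        then have "C \<in> Orb (A i)" using Ai[OF i(1)] orb_self by simp
        then obtain k where "k < p" "C = g k (A i)" unfolding Orb_def by blast
        then show "C \<in> {g k (A i) | i k. i \<in> {1..s} \<and> k < p}" using i by blast
      qed
      show "{g k (A i) | i k. i \<in> {1..s} \<and> k < p} \<subseteq> \<omega>" using Ai gin by blast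
    qed
    define blk where "blk x = (x-1) div p + 1" for x
    define \<delta> where "\<delta> i = blk ` A i" for i
    have blkinj: "inj_on blk (A i)" if "i \<in> {1..s}" for i
      by (rule inj_onI) (use C2 Ai[OF that] in \<open>auto simp: blk_def\<close>)
    have cd: "card (\<delta> i) = a" if "i \<in> {1..s}" for i
      unfolding \<delta>_def using card_image[OF blkinj[OF that]] Ai[OF that] assms(6) by simp
    have blkr: "blk x \<in> {1..n}" if "1 \<le> x" "x \<le> p*n" for x
    proof -
      have "x - 1 < p*n" using that by simp
      then have "(x-1) div p < n" by (simp add: less_mult_imp_div_less mult.commute)
      then show ?thesis unfolding blk_def by simp
    qed
    have ddisj: "\<delta> i \<inter> \<delta> i' = {}" if i: "i \<in> {1..s}" "i' \<in> {1..s}" "i \<noteq> i'" for i i'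
    proof (rule ccontr)
      assume "\<delta> i \<inter> \<delta> i' \<noteq> {}"
      then obtain x y where xy: "x \<in> A i" "y \<in> A i'" "blk x = blk y" unfolding \<delta>_def by blast
      have xr: "1 \<le> x" "x \<le> p*n" "1 \<le> y" "y \<le> p*n"
        using Bsub Ai i xy by (meson atLeastAtMost_iff subsetD)+
      have "(x-1) div p = (y-1) div p" using xy unfolding blk_def by simp
      then obtain k where k: "k < p" "(sigma p n ^^ k) x = y" using sig_connect[OF p0 xr] by blast
      have yin: "y \<in> g k (A i)" unfolding g_def using k xy by blast
      show False
      proof (cases "g k (A i) = A i'")
        case True
        then have "A i' \<in> Orb (A i)" using orb_all by metis
        then have "Orb (A i') = Orb (A i)" by (rule orb_eq)
        then show False using Adist i by metis
      next
        case False
        then have "g k (A i) \<inter> A i' = {}" using disj gin Ai i by blast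
        then show False using yin xy by blast
      qed
    qed
    have dne: "\<delta> i \<noteq> {}" if "i \<in> {1..s}" for i
      unfolding \<delta>_def using Bne Ai[OF that] by blast
    have part: "partition_on {1..a*s} (\<delta> ` {1..s})"
    proof (rule partition_onI)
      show "\<Union>(\<delta> ` {1..s}) = {1..a*s}"
      proof
        show "\<Union>(\<delta> ` {1..s}) \<subseteq> {1..a*s}"
        proof
          fix j assume "j \<in> \<Union>(\<delta> ` {1..s})"
          then obtain i x where i: "i \<in> {1..s}" and x: "x \<in> A i" "j = blk x" unfolding \<delta>_def by blast
          have "1 \<le> x" "x \<le> p*n" using Bsub Ai i x by (meson atLeastAtMost_iff subsetD)+
          then show "j \<in> {1..a*s}" using blkr x n_def by simp
        qed
        show "{1..a*s} \<subseteq> \<Union>(\<delta> ` {1..s})"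
        proof
          fix j assume j: "j \<in> {1..a*s}"
          define x where "x = p*(j-1) + 1"
          have "p*(j-1) + 1 \<le> p*(j-1) + p" using p0 by simp
          also have "\<dots> = p*j" using j by (cases j) auto
          also have "\<dots> \<le> p*n" using j n_def by simp
          finally have "x \<in> {1..p*n}" unfolding x_def by simp
          then obtain C where C: "C \<in> \<omega>" "x \<in> C" using U by blast
          then obtain i k where ik: "i \<in> {1..s}" "C = g k (A i)" using weq by blast
          then obtain y where y: "y \<in> A i" "x = (sigma p n ^^ k) y" using C unfolding g_def by blast
          have "blk y = blk x" unfolding blk_def using y sig_blk[OF p0] by metis
          also have "blk x = j" unfolding blk_def x_def using p0 j by simp
          finally show "j \<in> \<Union>(\<delta> ` {1..s})" unfolding \<delta>_def using y ik by blast
        qed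
      qed
      show "disjnt P Q" if "P \<in> \<delta> ` {1..s}" "Q \<in> \<delta> ` {1..s}" "P \<noteq> Q" for P Q
        using that ddisj unfolding disjnt_def by blast
      show "{} \<notin> \<delta> ` {1..s}" using dne by blast
    qed
    have dinj: "inj_on \<delta> {1..s}"
    proof (rule inj_onI, rule ccontr)
      fix i i' assume "i \<in> {1..s}" "i' \<in> {1..s}" "\<delta> i = \<delta> i'" "i \<noteq> i'"
      then show False using ddisj dne by fastforce
    qed
    have cardI: "card (A i \<inter> orb p j) = (if j \<in> \<delta> i then 1 else 0)"
      if i: "i \<in> {1..s}" and j: "j \<in> {1..a*s}" for i j
    proof -
      have ge: "1 \<le> x" if "x \<in> A i" for x using that Bsub Ai[OF i] by fastforce
      have eq: "A i \<inter> orb p j = {x \<in> A i. blk x = j}"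
        using orb_mem[OF p0, of j] j ge unfolding blk_def by auto
      show ?thesis
      proof (cases "j \<in> \<delta> i")
        case True
        then obtain x0 where x0: "x0 \<in> A i" "blk x0 = j" unfolding \<delta>_def by blast
        have "{x \<in> A i. blk x = j} = {x0}"
          using x0 blkinj[OF i] unfolding inj_on_def by blast
        then show ?thesis using eq True by simp
      next
        case False
        then have "{x \<in> A i. blk x = j} = {}" unfolding \<delta>_def by blast
        then show ?thesis using eq False by (simp only: card.empty if_False)
      qed
    qed
    show "\<exists>(\<delta> :: nat \<Rightarrow> nat set) (A :: nat \<Rightarrow> nat set).
        partition_on {1 .. a * s} (\<delta> ` {1..s}) \<and> card (\<delta> ` {1..s}) = s \<and>
        (\<forall>i\<in>{1..s}. card (\<delta> i) = a) \<and>
        (\<forall>i\<in>{1..s}. A i \<in> \<omega>) \<and>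
        (\<forall>i\<in>{1..s}. \<forall>j\<in>{1 .. a * s}.
            card (A i \<inter> orb p j) = (if j \<in> \<delta> i then 1 else 0)) \<and>
        \<omega> = {setact (sigma p (a * s) ^^ k) (A i) | i k. i \<in> {1..s} \<and> k < p}"
      unfolding setg
      apply (rule exI[of _ \<delta>], rule exI[of _ A])
      using part card_image[OF dinj] cd Ai cardI weq by auto
  next
    assume "\<exists>(\<delta> :: nat \<Rightarrow> nat set) (A :: nat \<Rightarrow> nat set).
        partition_on {1 .. a * s} (\<delta> ` {1..s}) \<and> card (\<delta> ` {1..s}) = s \<and>
        (\<forall>i\<in>{1..s}. card (\<delta> i) = a) \<and>
        (\<forall>i\<in>{1..s}. A i \<in> \<omega>) \<and>
        (\<forall>i\<in>{1..s}. \<forall>j\<in>{1 .. a * s}.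
            card (A i \<inter> orb p j) = (if j \<in> \<delta> i then 1 else 0)) \<and>
        \<omega> = {setact (sigma p (a * s) ^^ k) (A i) | i k. i \<in> {1..s} \<and> k < p}"
    then obtain A where weq: "\<omega> = {g k (A i) | i k. i \<in> {1..s} \<and> k < p}"
      unfolding setg by blast
    have "g m ` \<omega> = \<omega>" for m
    proof
      show "g m ` \<omega> \<subseteq> \<omega>"
      proof
        fix Y assume "Y \<in> g m ` \<omega>"
        then obtain i k where ik: "i \<in> {1..s}" "Y = g m (g k (A i))" using weq by blast
        then have "Y = g ((m+k) mod p) (A i)" using gadd gmod by metis
        moreover have "(m+k) mod p < p" using p0 by simp
        ultimately show "Y \<in> \<omega>" using weq ik by blast
      qed
      show "\<omega> \<subseteq> g m ` \<omega>"
      proof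
        fix X assume "X \<in> \<omega>"
        then obtain i k where ik: "i \<in> {1..s}" "k < p" "X = g k (A i)" using weq by blast
        define k' where "k' = (k + p*m - m) mod p"
        have "k' < p" using p0 unfolding k'_def by simp
        then have Y: "g k' (A i) \<in> \<omega>" using weq ik by blast
        have le: "m \<le> p*m" using p0 by simp
        have "(m + k') mod p = (m + (k + p*m - m)) mod p" unfolding k'_def by (simp add: mod_add_right_eq)
        also have "m + (k + p*m - m) = k + p*m" using le by linarith
        also have "(k + p*m) mod p = k" using ik by simp
        finally have "g m (g k' (A i)) = X" using gadd gmod ik by metis
        then show "X \<in> g m ` \<omega>" using Y by blast
      qed
    qed
    then show "fixed_by_R p (a * s) \<omega>" using fixg by blast
  qed
qed

end
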